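(* Let $f,h:\mathbb{R}\to\mathbb{R}$ be continuous, with $f$ positive and nondecreasing and $h$ nonnegative and nonincreasing. For $a\in\mathbb{R}$ set $$\mathcal{R}(a)=\int_a^{+\infty}\frac{dt}{\left(\int_a^te^{-2\int_s^th(r)\,dr}f(s)\,ds\right)^{1/2}}\in(0,+\infty].$$ Then either $\mathcal{R}(a)=+\infty$ for every $a\in\mathbb{R}$, or $\mathcal{R}(a)<+\infty$ for every $a\in\mathbb{R}$. In the latter case $\mathcal{R}:\mathbb{R}\to(0,+\infty)$ is monotone nonincreasing and $\lim_{a\to+\infty}\mathcal{R}(a)=0$. *)

theory Defs
  imports "HOL-Analysis.Analysis"
begin

text \<open>Inner quantity: int_a^t exp(-2 int_s^t h(r) dr) f(s) ds (Henstock-Kurzweil integral,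
  coinciding with the Riemann integral for continuous data).\<close>
definition inner_int :: "(real \<Rightarrow> real) \<Rightarrow> (real \<Rightarrow> real) \<Rightarrow> real \<Rightarrow> real \<Rightarrow> real" where
  "inner_int f h a t = integral {a..t} (\<lambda>s. exp (- 2 * integral {s..t} h) * f s)"

definition calR :: "(real \<Rightarrow> real) \<Rightarrow> (real \<Rightarrow> real) \<Rightarrow> real \<Rightarrow> ennreal" where
  "calR f h a = (\<integral>\<^sup>+ t \<in> {a<..}. ennreal (1 / sqrt (inner_int f h a t)) \<partial>lborel)"

end

theory Submission
  imports Defs
begin

lemma ind_cont':
  fixes g :: "real \<Rightarrow> real"
  assumes "continuous_on UNIV g"
  shows "continuous_on {c..d} (\<lambda>s. integral {s..d} g)"
  by (rule indefinite_integral_continuous_1', rule integrable_continuous_interval,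
      rule continuous_on_subset[OF assms], auto)

lemma int_cont:
  fixes g :: "real \<Rightarrow> real"
  assumes "continuous_on UNIV g"
  shows "g integrable_on {c..d}"
  by (rule integrable_continuous_interval, rule continuous_on_subset[OF assms], auto)

lemma cont_Ici:
  fixes g :: "real \<Rightarrow> real"
  assumes "\<And>b. continuous_on {a..b} g"
  shows "continuous_on {a..} g"
  unfolding continuous_on_eq_continuous_within
proof
  fix x assume x: "x \<in> {a..}"
  have "continuous (at x within {a..x+1}) g"
    using assms[of "x+1"] x by (simp add: continuous_on_eq_continuous_within)
  moreover have "at x within {a..} = at x within {a..x+1}"
    by (rule at_within_nhd[of x "{..<x+1}"]) auto
  ultimately show "continuous (at x within {a..}) g" by simp
qed

locale L =
  fixes f h :: "real \<Rightarrow> real"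
  assumes fc: "continuous_on UNIV f" and hc: "continuous_on UNIV h"
    and fpos: "\<And>x. f x > 0" and fmono: "mono f"
    and hnn: "\<And>x. h x \<ge> 0" and hanti: "antimono h"
begin

abbreviation F where "F \<equiv> inner_int f h"

lemma h_int: "h integrable_on {c..d}" by (rule int_cont[OF hc])

lemma hint_nonneg: "0 \<le> integral {s..t} h"
  using Henstock_Kurzweil_Integration.integral_nonneg[OF h_int] hnn by blast

lemma phi_cont: "continuous_on {c..d} (\<lambda>s. exp (- 2 * integral {s..d} h) * f s)"
  by (intro continuous_intros ind_cont'[OF hc] continuous_on_subset[OF fc]) auto

lemma phi_int: "(\<lambda>s. exp (- 2 * integral {s..d} h) * f s) integrable_on {c..d}"
  by (rule integrable_continuous_interval[OF phi_cont])

lemma hint_le: assumes "a \<le> s" "s \<le> t" shows "integral {s..t} h \<le> h a * (t - s)"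
proof -
  have "integral {s..t} h \<le> integral {s..t} (\<lambda>_. h a)"
    using assms by (intro integral_le h_int) (auto intro: antimonoD[OF hanti])
  then show ?thesis using assms by (simp add: mult.commute)
qed

lemma F_empty: "t \<le> a \<Longrightarrow> F a t = 0"
  by (cases "t < a") (auto simp: inner_int_def)

lemma F_lower: assumes "a \<le> t"
  shows "exp (-2 * h a * (t - a)) * f a * (t - a) \<le> F a t"
proof -
  have "integral {a..t} (\<lambda>_. exp (-2 * h a * (t - a)) * f a)
      \<le> integral {a..t} (\<lambda>s. exp (- 2 * integral {s..t} h) * f s)"
  proof (rule integral_le[OF _ phi_int])
    show "(\<lambda>_. exp (-2 * h a * (t - a)) * f a) integrable_on {a..t}"
      by (rule integrable_continuous_interval) (rule continuous_intros)
    fix s assume s: "s \<in> {a..t}"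
    have "integral {s..t} h \<le> h a * (t - s)" using hint_le s by auto
    also have "\<dots> \<le> h a * (t - a)" using s hnn[of a] by (intro mult_left_mono) auto
    finally have "exp (-2 * h a * (t - a)) \<le> exp (- 2 * integral {s..t} h)" by simp
    moreover have "f a \<le> f s" using s fmono by (auto dest: monoD)
    ultimately show "exp (-2 * h a * (t - a)) * f a \<le> exp (- 2 * integral {s..t} h) * f s"
      using fpos[of a] by (intro mult_mono) auto
  qed
  then show ?thesis using assms by (simp add: inner_int_def mult_ac)
qed

lemma F_upper: assumes "a \<le> t" shows "F a t \<le> f t * (t - a)"
proof -
  have "integral {a..t} (\<lambda>s. exp (- 2 * integral {s..t} h) * f s) \<le> integral {a..t} (\<lambda>_. f t)"
  proof (rule integral_le[OF phi_int])
    show "(\<lambda>_. f t) integrable_on {a..t}"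
      by (rule integrable_continuous_interval) (rule continuous_intros)
    fix s assume s: "s \<in> {a..t}"
    have "exp (- 2 * integral {s..t} h) \<le> 1" using hint_nonneg[of s t] by simp
    moreover have "f s \<le> f t" using s fmono by (auto dest: monoD)
    ultimately show "exp (- 2 * integral {s..t} h) * f s \<le> f t"
      using fpos[of s] by (smt (verit) mult_left_le_one_le exp_gt_zero mult.commute)
  qed
  then show ?thesis using assms by (simp add: inner_int_def mult.commute)
qed

lemma F_pos: assumes "a < t" shows "0 < F a t"
proof -
  have "0 < exp (-2 * h a * (t - a)) * f a * (t - a)" using assms fpos[of a] by simp
  then show ?thesis using F_lower[of a t] assms by linarith
qed

lemma F_anti1: assumes "a \<le> b" "b \<le> t" shows "F b t \<le> F a t"
proof -
  have "integral {a..b} (\<lambda>s. exp (- 2 * integral {s..t} h) * f s)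
      + integral {b..t} (\<lambda>s. exp (- 2 * integral {s..t} h) * f s) = F a t"
    unfolding inner_int_def by (rule Henstock_Kurzweil_Integration.integral_combine[OF assms phi_int])
  moreover have "0 \<le> integral {a..b} (\<lambda>s. exp (- 2 * integral {s..t} h) * f s)"
  proof (rule Henstock_Kurzweil_Integration.integral_nonneg)
    show "(\<lambda>s. exp (- 2 * integral {s..t} h) * f s) integrable_on {a..b}"
      by (rule integrable_on_subinterval[OF phi_int[where c=a and d=t]]) (use assms in auto)
  qed (simp add: fpos less_imp_le)
  ultimately show ?thesis unfolding inner_int_def by linarith
qed

lemma hsh_cont: "continuous_on UNIV (\<lambda>r. h (r + c))"
  by (rule continuous_on_compose2[OF hc _ subset_UNIV]) (intro continuous_intros)

lemma fsh_cont: "continuous_on UNIV (\<lambda>r. f (r + c))"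
  by (rule continuous_on_compose2[OF fc _ subset_UNIV]) (intro continuous_intros)

lemma F_shift: assumes "0 \<le> \<tau>"
  shows "F a (a + \<tau>) = integral {0..\<tau>} (\<lambda>\<sigma>. exp (-2 * integral {\<sigma>..\<tau>} (\<lambda>r. h (r + a))) * f (\<sigma> + a))"
proof -
  have "F a (a + \<tau>) = integral {a-a..a+\<tau>-a} (\<lambda>x. exp (- 2 * integral {x+a..a+\<tau>} h) * f (x+a))"
    unfolding inner_int_def by (rule integral_shift_real_ivl[symmetric])
  also have "\<dots> = integral {0..\<tau>} (\<lambda>\<sigma>. exp (-2 * integral {\<sigma>..\<tau>} (\<lambda>r. h (r + a))) * f (\<sigma> + a))"
  proof (simp, rule integral_cong)
    fix x assume "x \<in> {0..\<tau>}"
    have "integral {x+a-a..a+\<tau>-a} (\<lambda>r. h (r + a)) = integral {x+a..a+\<tau>} h"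
      by (rule integral_shift_real_ivl)
    then show "exp (- (2 * integral {x + a..a + \<tau>} h)) * f (x + a) =
         exp (- (2 * integral {x..\<tau>} (\<lambda>r. h (r + a)))) * f (x + a)" by simp
  qed
  finally show ?thesis .
qed

lemma shphi_int: "(\<lambda>\<sigma>. exp (-2 * integral {\<sigma>..\<tau>} (\<lambda>r. h (r + c))) * f (\<sigma> + c)) integrable_on {0..\<tau>}"
proof (rule integrable_continuous_interval)
  have 1: "continuous_on {0..\<tau>} (\<lambda>\<sigma>. integral {\<sigma>..\<tau>} (\<lambda>r. h (r + c)))"
    by (rule ind_cont'[OF hsh_cont])
  have 2: "continuous_on {0..\<tau>} (\<lambda>\<sigma>. f (\<sigma> + c))"
    by (rule continuous_on_subset[OF fsh_cont]) simp
  show "continuous_on {0..\<tau>} (\<lambda>\<sigma>. exp (-2 * integral {\<sigma>..\<tau>} (\<lambda>r. h (r + c))) * f (\<sigma> + c))"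
    by (intro continuous_on_mult continuous_on_exp continuous_on_mult_left 1 2)
qed

lemma F_shift_mono: assumes "a \<le> b" "0 \<le> \<tau>" shows "F a (a + \<tau>) \<le> F b (b + \<tau>)"
  unfolding F_shift[OF assms(2)]
proof (rule integral_le[OF shphi_int shphi_int])
  fix \<sigma> assume s: "\<sigma> \<in> {0..\<tau>}"
  have "integral {\<sigma>..\<tau>} (\<lambda>r. h (r + b)) \<le> integral {\<sigma>..\<tau>} (\<lambda>r. h (r + a))"
  proof (rule integral_le[OF int_cont[OF hsh_cont] int_cont[OF hsh_cont]])
    fix r assume "r \<in> {\<sigma>..\<tau>}"
    show "h (r + b) \<le> h (r + a)" using assms(1) by (intro antimonoD[OF hanti]) simp
  qed
  then have "exp (-2 * integral {\<sigma>..\<tau>} (\<lambda>r. h (r + a))) \<le> exp (-2 * integral {\<sigma>..\<tau>} (\<lambda>r. h (r + b)))"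
    by simp
  moreover have "f (\<sigma> + a) \<le> f (\<sigma> + b)" using assms(1) by (intro monoD[OF fmono]) simp
  ultimately show "exp (-2 * integral {\<sigma>..\<tau>} (\<lambda>r. h (r + a))) * f (\<sigma> + a)
      \<le> exp (-2 * integral {\<sigma>..\<tau>} (\<lambda>r. h (r + b))) * f (\<sigma> + b)"
    using fpos[of "\<sigma> + a"] by (intro mult_mono) auto
qed

lemma F_cont_Icc: "continuous_on {a..b} (F a)"
proof -
  define I where "I = (\<lambda>t. integral {a..t} h)"
  define J where "J = (\<lambda>t. integral {a..t} (\<lambda>s. exp (2 * I s) * f s))"
  have Ic: "continuous_on {a..b} I" for b
    unfolding I_def by (rule indefinite_integral_continuous_1[OF h_int])
  have Jc: "continuous_on {a..b} J"
    unfolding J_def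
    by (rule indefinite_integral_continuous_1, rule integrable_continuous_interval)
       (intro continuous_intros Ic continuous_on_subset[OF fc]; auto)
  have "continuous_on {a..b} (\<lambda>t. exp (-2 * I t) * J t)"
    by (intro continuous_intros Ic Jc)
  moreover have "exp (-2 * I t) * J t = F a t" if t: "t \<in> {a..b}" for t
  proof -
    have "integral {a..t} (\<lambda>s. exp (- 2 * integral {s..t} h) * f s)
        = integral {a..t} (\<lambda>s. exp (-2 * I t) * (exp (2 * I s) * f s))"
    proof (rule integral_cong)
      fix s assume s: "s \<in> {a..t}"
      have "I s + integral {s..t} h = I t"
        unfolding I_def using s by (intro Henstock_Kurzweil_Integration.integral_combine h_int) auto
      then have "integral {s..t} h = I t - I s" by simp
      moreover have "exp (- 2 * (I t - I s)) = exp (-2 * I t) * exp (2 * I s)"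
        by (simp add: exp_add[symmetric] algebra_simps)
      ultimately show "exp (- 2 * integral {s..t} h) * f s = exp (-2 * I t) * (exp (2 * I s) * f s)"
        by simp
    qed
    also have "\<dots> = exp (-2 * I t) * J t" unfolding J_def by simp
    finally show ?thesis by (simp add: inner_int_def)
  qed
  ultimately show ?thesis by (rule continuous_on_eq)
qed

lemma F_meas: "F a \<in> borel_measurable borel"
proof -
  have "(\<lambda>x. indicator {a..} x *\<^sub>R F a x) \<in> borel_measurable borel"
    by (intro borel_measurable_continuous_on_indicator cont_Ici F_cont_Icc) auto
  moreover have "(\<lambda>x. indicator {a..} x *\<^sub>R F a x) = F a"
    by (auto simp: fun_eq_iff indicator_def F_empty)
  ultimately show ?thesis by simp
qed

lemma inv_sqrt_mono: "0 < (x::real) \<Longrightarrow> x \<le> y \<Longrightarrow> 1 / sqrt y \<le> 1 / sqrt x"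
  by (intro divide_left_mono) (auto intro: mult_pos_pos)

lemma G_meas: "(\<lambda>t. ennreal (1 / sqrt (F a t)) * indicator A t) \<in> borel_measurable borel"
  if "A \<in> sets borel"
proof -
  note F_meas[of a, measurable]
  show ?thesis using that by measurable
qed

lemma calR_shift:
  "calR f h a = (\<integral>\<^sup>+ \<tau>. ennreal (1 / sqrt (F a (a + \<tau>))) * indicator {0<..} \<tau> \<partial>lborel)"
proof -
  have "calR f h a = (\<integral>\<^sup>+ t. ennreal (1 / sqrt (F a t)) * indicator {a<..} t \<partial>lborel)"
    unfolding calR_def ..
  also have "\<dots> = ennreal \<bar>1::real\<bar> * (\<integral>\<^sup>+ \<tau>. ennreal (1 / sqrt (F a (a + 1 * \<tau>))) * indicator {a<..} (a + 1 * \<tau>) \<partial>lborel)"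
    by (rule nn_integral_real_affine[OF G_meas]) auto
  also have "\<dots> = (\<integral>\<^sup>+ \<tau>. ennreal (1 / sqrt (F a (a + \<tau>))) * indicator {0<..} \<tau> \<partial>lborel)"
    by (simp add: indicator_def)
  finally show ?thesis .
qed

lemma u_mono: assumes "a \<le> b"
  shows "ennreal (1 / sqrt (F b (b + \<tau>))) * indicator {0<..} \<tau>
     \<le> ennreal (1 / sqrt (F a (a + \<tau>))) * indicator {0<..} \<tau>"
proof (cases "0 < \<tau>")
  case True
  then have "1 / sqrt (F b (b + \<tau>)) \<le> 1 / sqrt (F a (a + \<tau>))"
    using F_pos[of a "a+\<tau>"] F_shift_mono[OF assms, of \<tau>] by (intro inv_sqrt_mono) auto
  then show ?thesis using True by (simp add: ennreal_leI)
qed simp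

lemma calR_mono: assumes "a \<le> b" shows "calR f h b \<le> calR f h a"
  unfolding calR_shift by (rule nn_integral_mono, rule u_mono[OF assms])

lemma calR_pos: "0 < calR f h a"
proof -
  have "0 < ennreal (1 / sqrt (f (a+1))) * emeasure lborel {a<..a+1}"
    using fpos[of "a+1"] by simp
  also have "\<dots> = (\<integral>\<^sup>+ t. ennreal (1 / sqrt (f (a+1))) * indicator {a<..a+1} t \<partial>lborel)"
    by (rule nn_integral_cmult_indicator[symmetric]) simp
  also have "\<dots> \<le> calR f h a"
    unfolding calR_def
  proof (rule nn_integral_mono)
    fix t :: real
    show "ennreal (1 / sqrt (f (a+1))) * indicator {a<..a+1} t \<le> ennreal (1 / sqrt (F a t)) * indicator {a<..} t"
    proof (cases "t \<in> {a<..a+1}")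
      case True
      have "F a t \<le> f t * (t - a)" using F_upper[of a t] True by simp
      also have "\<dots> \<le> f (a+1) * 1"
      proof (rule mult_mono)
        show "f t \<le> f (a+1)" using True by (intro monoD[OF fmono]) simp
      qed (use True fpos[of "a+1"] in auto)
      finally have "1 / sqrt (f (a+1)) \<le> 1 / sqrt (F a t)"
        using F_pos[of a t] True by (intro inv_sqrt_mono) auto
      then show ?thesis using True by (simp add: ennreal_leI)
    qed simp
  qed
  finally show ?thesis .
qed

lemma calR_inf: assumes M: "\<And>x. f x \<le> M" shows "calR f h a = \<infinity>"
proof -
  have Mpos: "0 < M" using fpos[of 0] M[of 0] by linarith
  have ge: "ennreal (real n) \<le> calR f h a" for n :: nat
  proof -
    define r where "r = real n + 1"
    define k where "k = M * r^2"
    have r: "r > 0" "k > 0" using Mpos by (auto simp: r_def k_def)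
    define c where "c = 1 / (2*M*r)"
    have c0: "c > 0" using Mpos r by (simp add: c_def)
    have "c * (3*k) = 3*r/2" using Mpos r by (simp add: c_def k_def power2_eq_square field_simps)
    then have "ennreal (real n) \<le> ennreal (c * (3*k))"
      by (intro ennreal_leI) (simp add: r_def)
    also have "\<dots> = ennreal c * emeasure lborel {a+k..a+4*k}"
      using r c0 by (simp add: ennreal_mult)
    also have "\<dots> = (\<integral>\<^sup>+ t. ennreal c * indicator {a+k..a+4*k} t \<partial>lborel)"
      by (rule nn_integral_cmult_indicator[symmetric]) simp
    also have "\<dots> \<le> calR f h a"
      unfolding calR_def
    proof (rule nn_integral_mono)
      fix t :: real
      show "ennreal c * indicator {a+k..a+4*k} t \<le> ennreal (1 / sqrt (F a t)) * indicator {a<..} t"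
      proof (cases "t \<in> {a+k..a+4*k}")
        case True
        have ta: "a < t" using True r by auto
        have "F a t \<le> f t * (t - a)" using F_upper[of a t] ta by simp
        also have "\<dots> \<le> M * (4*k)"
        proof (rule mult_mono)
          show "f t \<le> M" by (rule M)
        qed (use True Mpos in auto)
        also have "\<dots> = (2*M*r)^2" by (simp add: k_def power2_eq_square)
        finally have "1 / sqrt ((2*M*r)^2) \<le> 1 / sqrt (F a t)"
          using F_pos[OF ta] by (intro inv_sqrt_mono) auto
        then have "c \<le> 1 / sqrt (F a t)" using Mpos r by (simp add: c_def)
        then show ?thesis using True ta by (simp add: ennreal_leI)
      qed simp
    qed
    finally show ?thesis .
  qed
  show ?thesis
  proof (rule ccontr)
    assume "calR f h a \<noteq> \<infinity>"
    then obtain x where x: "calR f h a = ennreal x" "0 \<le> x"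
      by (cases "calR f h a" rule: ennreal_cases) auto
    obtain n :: nat where n: "x < real n" using reals_Archimedean2 by blast
    have "ennreal (real n) \<le> ennreal x" using ge[of n] x by simp
    then have "real n \<le> x" using x by (simp add: ennreal_le_iff)
    then show False using n by simp
  qed
qed

lemma powr_mhalf: "0 < (x::real) \<Longrightarrow> x powr (-1/2) = 1 / sqrt x"
  by (metis less_eq_real_def minus_divide_left powr_half_sqrt powr_minus_divide)

lemma calR_fin_left: assumes ab: "a < b" and fin: "calR f h b < \<infinity>" shows "calR f h a < \<infinity>"
proof -
  define c0 where "c0 = exp (-2 * h a * (b - a)) * f a"
  have c0: "c0 > 0" using fpos[of a] by (simp add: c0_def)
  define C where "C = 1 / sqrt c0"
  define g where "g = (\<lambda>t. C * (t - a) powr (-1/2))"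
  have gi: "(g has_integral (C * ((b-a) powr (1/2) / (1/2)))) {a..b}"
  proof -
    have "((\<lambda>x. x powr (-1/2)) has_integral ((b-a) powr (-1/2+1) / (-1/2+1))) {0..b-a}"
      by (rule has_integral_powr_from_0) (use ab in auto)
    then have "((\<lambda>x. (x + (-a)) powr (-1/2)) has_integral ((b-a) powr (-1/2+1) / (-1/2+1))) {0 - (-a)..(b-a) - (-a)}"
      by (rule has_integral_shift_real_ivl)
    then have "((\<lambda>x. (x - a) powr (-1/2)) has_integral ((b-a) powr (1/2) / (1/2))) {a..b}"
      by simp
    then show ?thesis unfolding g_def by (rule has_integral_mult_right)
  qed
  have gnn: "\<And>x. x \<in> {a..b} \<Longrightarrow> 0 \<le> g x" using c0 by (simp add: g_def C_def)
  have I1: "(\<integral>\<^sup>+ t. ennreal (indicator {a..b} t * g t) \<partial>lborel) = ennreal (C * ((b-a) powr (1/2) / (1/2)))"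
    by (rule nn_integral_has_integral_lebesgue[OF gnn gi])
  have "calR f h a \<le> (\<integral>\<^sup>+ t. ennreal (indicator {a..b} t * g t) + ennreal (1 / sqrt (F b t)) * indicator {b<..} t \<partial>lborel)"
    unfolding calR_def
  proof (rule nn_integral_mono)
    fix t :: real
    consider "t \<le> a" | "a < t" "t \<le> b" | "b < t" by linarith
    then show "ennreal (1 / sqrt (F a t)) * indicator {a<..} t
      \<le> ennreal (indicator {a..b} t * g t) + ennreal (1 / sqrt (F b t)) * indicator {b<..} t"
    proof cases
      case 1 then show ?thesis by simp
    next
      case 2
      have "c0 * (t - a) \<le> exp (-2 * h a * (t - a)) * f a * (t - a)"
        unfolding c0_def
      proof (intro mult_right_mono)
        show "exp (- 2 * h a * (b - a)) \<le> exp (- 2 * h a * (t - a))"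
          using 2 hnn[of a] by (simp add: mult_left_mono)
      qed (use 2 fpos[of a] in auto)
      also have "\<dots> \<le> F a t" using F_lower[of a t] 2 by simp
      finally have "1 / sqrt (F a t) \<le> 1 / sqrt (c0 * (t - a))"
        using 2 c0 by (intro inv_sqrt_mono) auto
      also have "\<dots> = g t"
        using 2 c0 powr_mhalf[of "t - a"] by (simp add: g_def C_def real_sqrt_mult)
      finally have "ennreal (1 / sqrt (F a t)) \<le> ennreal (indicator {a..b} t * g t)"
        using 2 by (intro ennreal_leI) simp
      then show ?thesis using 2 by (simp add: add_increasing2)
    next
      case 3
      have "1 / sqrt (F a t) \<le> 1 / sqrt (F b t)"
        using 3 ab F_pos[of b t] F_anti1[of a b t] by (intro inv_sqrt_mono) auto
      then have "ennreal (1 / sqrt (F a t)) \<le> ennreal (1 / sqrt (F b t))" by (rule ennreal_leI)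
      then show ?thesis using 3 ab by (simp add: add_increasing)
    qed
  qed
  also have "\<dots> = (\<integral>\<^sup>+ t. ennreal (indicator {a..b} t * g t) \<partial>lborel) + calR f h b"
    unfolding calR_def
    by (rule nn_integral_add) (auto simp: g_def intro!: G_meas)
  also have "\<dots> < \<infinity>" using I1 fin by simp
  finally show ?thesis .
qed

lemma calR_lim: assumes fin: "calR f h 0 < \<infinity>" and unb: "\<And>M. \<exists>x. f x > M"
  shows "(calR f h \<longlongrightarrow> 0) at_top"
proof -
  define u where "u = (\<lambda>(n::nat) \<tau>. ennreal (1 / sqrt (F (real n) (real n + \<tau>))) * indicator {0<..} \<tau>)"
  have calRn: "calR f h (real n) = integral\<^sup>N lborel (u n)" for n
    by (simp add: u_def calR_shift)
  have dec: "AE x in lborel. u (Suc i) x \<le> u i x" for i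
    unfolding u_def by (intro AE_I2 u_mono) simp
  have meas: "u i \<in> borel_measurable lborel" for i
  proof -
    note F_meas[measurable]
    show ?thesis unfolding u_def by measurable
  qed
  have fin0: "(\<integral>\<^sup>+ x. u 0 x \<partial>lborel) < \<infinity>" using fin calRn[of 0] by simp
  have lim0: "(INF i. u i \<tau>) = 0" for \<tau>
  proof (cases "0 < \<tau>")
    case False then show ?thesis by (simp add: u_def)
  next
    case True
    have "(INF i. u i \<tau>) \<le> 0"
    proof (rule ennreal_le_epsilon)
      fix e :: real assume e: "0 < e"
      define K where "K = exp (-2 * h 0 * \<tau>) * \<tau>"
      have K: "K > 0" using True by (simp add: K_def)
      obtain x where x: "f x > 1 / (e^2 * K)" using unb by blast
      obtain n :: nat where n: "x < real n" using reals_Archimedean2 by blast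
      have "f x \<le> f (real n)" using n by (intro monoD[OF fmono]) simp
      have "exp (-2 * h 0 * \<tau>) \<le> exp (-2 * h (real n) * \<tau>)"
        using True antimonoD[OF hanti, of 0 "real n"] by simp
      then have "K * f (real n) \<le> exp (-2 * h (real n) * \<tau>) * f (real n) * \<tau>"
        using True fpos[of "real n"] unfolding K_def
        by (simp add: mult_right_mono mult.commute mult.left_commute)
      also have "\<dots> \<le> F (real n) (real n + \<tau>)"
        using F_lower[of "real n" "real n + \<tau>"] True by simp
      finally have KF: "K * f (real n) \<le> F (real n) (real n + \<tau>)" .
      have "1 / (e^2) = K * (1 / (e^2 * K))" using K e by (simp add: field_simps)
      also have "\<dots> < K * f (real n)"
        using x \<open>f x \<le> f (real n)\<close> K by (intro mult_strict_left_mono) auto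
      finally have "1 / (e^2) < F (real n) (real n + \<tau>)" using KF by linarith
      then have "1 / sqrt (F (real n) (real n + \<tau>)) \<le> 1 / sqrt (1 / e^2)"
        using e by (intro inv_sqrt_mono) auto
      also have "\<dots> = e" using e by (simp add: real_sqrt_divide)
      finally have "u n \<tau> \<le> ennreal e" using True by (simp add: u_def ennreal_leI)
      then show "(INF i. u i \<tau>) \<le> 0 + ennreal e" by (simp add: INF_lower2)
    qed
    then show ?thesis by simp
  qed
  have "(INF i. calR f h (real i)) = (\<integral>\<^sup>+ x. (INF i. u i x) \<partial>lborel)"
    unfolding calRn by (rule nn_integral_monotone_convergence_INF_AE[OF dec meas fin0, symmetric])
  also have "\<dots> = 0" by (simp add: lim0)
  finally have INF0: "(INF i. calR f h (real i)) = 0" .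
  show ?thesis
  proof (rule order_tendstoI)
    fix y :: ennreal assume "y < 0" then show "eventually (\<lambda>a. y < calR f h a) at_top" by simp
  next
    fix y :: ennreal assume "0 < y"
    then obtain i where i: "calR f h (real i) < y" using INF0 by (metis INF_less_iff)
    show "eventually (\<lambda>a. calR f h a < y) at_top"
      unfolding eventually_at_top_linorder
      using i calR_mono by (meson le_less_trans)
  qed
qed

end

theorem lemma2p4:
  fixes f h :: "real \<Rightarrow> real"
  assumes "continuous_on UNIV f" and "continuous_on UNIV h"
    and "\<And>x. f x > 0" and "mono f"
    and "\<And>x. h x \<ge> 0" and "antimono h"
  shows "(\<forall>a. calR f h a = \<infinity>) \<or>
         ((\<forall>a. 0 < calR f h a \<and> calR f h a < \<infinity>) \<and> antimono (calR f h) \<and>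
          ((calR f h) \<longlongrightarrow> 0) at_top)"
proof -
  interpret L f h using assms by unfold_locales
  show ?thesis
  proof (cases "\<forall>a. calR f h a = \<infinity>")
    case True then show ?thesis by blast
  next
    case False
    then obtain a0 where "calR f h a0 \<noteq> \<infinity>" by blast
    then have a0: "calR f h a0 < \<infinity>" by (simp add: top.not_eq_extremum)
    have allfin: "calR f h a < \<infinity>" for a
    proof (cases "a0 \<le> a")
      case True show ?thesis by (rule le_less_trans[OF calR_mono[OF True] a0])
    next
      case False then have "a < a0" by simp
      then show ?thesis by (rule calR_fin_left[OF _ a0])
    qed
    have unb: "\<exists>x. f x > M" for M
    proof (rule ccontr)
      assume "\<not> (\<exists>x. f x > M)"
      then have "\<And>x. f x \<le> M" by (simp add: not_less)
      then have "calR f h a0 = \<infinity>" by (rule calR_inf)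
      then show False using a0 by simp
    qed
    have "antimono (calR f h)" by (rule antimonoI) (rule calR_mono)
    moreover have "((calR f h) \<longlongrightarrow> 0) at_top" by (rule calR_lim[OF allfin unb])
    ultimately show ?thesis using allfin calR_pos by (intro disjI2 conjI allI)
  qed
qed

end
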